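(* For every number $a$ and every integer $k\geq1$, $$\sum_{r=1}^{k}(-1)^{k-r}\sum_{\substack{k_1+\cdots+k_r=k\\ k_i\geq1}}\ \prod_{i=1}^{r}\frac{a(a-k_i)^{k_i-1}}{k_i!}=\frac{a(a+k)^{k-1}}{k!} \quad\text{and}\quad \sum_{r=1}^{k}(-1)^{k-r}\sum_{\substack{k_1+\cdots+k_r=k\\ k_i\geq1}}\ \prod_{i=1}^{r}\frac{a(a+k_i)^{k_i-1}}{k_i!}=\frac{a(a-k)^{k-1}}{k!},$$ where the inner sums run over all ordered $r$-tuples of positive integers with sum $k$.
   Context: The convention $0^0=1$ is used. *)

theory Defs
  imports Complex_Main
begin

definition compositions :: "nat \<Rightarrow> nat \<Rightarrow> nat list set" where
  "compositions k r = {ks. length ks = r \<and> (\<forall>i\<in>set ks. i \<ge> 1) \<and> sum_list ks = k}"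

end

theory Submission
  imports Defs
begin



lemma FD:
  fixes c :: complex
  shows "m < n \<Longrightarrow> (\<Sum>k\<le>n. (-1)^k * of_nat (n choose k) * (c + of_nat k)^m) = 0"
proof (induction m arbitrary: n c)
  case 0
  then show ?case using choose_alternating_sum[of n, where 'a=complex] by simp
next
  case (Suc m)
  then obtain n' where n: "n = Suc n'" by (cases n) auto
  have split: "(c + of_nat k)^Suc m = c * (c + of_nat k)^m + of_nat k * (c + of_nat k)^m" for k
    by (simp add: algebra_simps)
  have "(\<Sum>k\<le>n. (-1)^k * of_nat (n choose k) * (c + of_nat k)^Suc m)
      = c * (\<Sum>k\<le>n. (-1)^k * of_nat (n choose k) * (c + of_nat k)^m)
        + (\<Sum>k\<le>n. (-1)^k * of_nat k * of_nat (n choose k) * (c + of_nat k)^m)"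
    by (simp add: split sum_distrib_left sum.distrib algebra_simps)
  also have "(\<Sum>k\<le>n. (-1)^k * of_nat (n choose k) * (c + of_nat k)^m) = 0"
    using Suc by simp
  also have "(\<Sum>k\<le>n. (-1)^k * of_nat k * of_nat (n choose k) * (c + of_nat k)^m :: complex)
      = (\<Sum>k\<le>n'. (-1)^Suc k * of_nat (Suc k * (Suc n' choose Suc k)) * (c + of_nat (Suc k))^m)"
    unfolding n by (simp only: sum.atMost_Suc_shift of_nat_mult) (simp add: algebra_simps)
  also have "\<dots> = - of_nat (Suc n') * (\<Sum>k\<le>n'. (-1)^k * of_nat (n' choose k) * ((c+1) + of_nat k)^m)"
    by (subst sum_distrib_left, rule sum.cong[OF refl], subst Suc_times_binomial) (simp add: algebra_simps)
  also have "(\<Sum>k\<le>n'. (-1)^k * of_nat (n' choose k) * ((c+1) + of_nat k)^m) = 0"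
    using Suc.IH[of n' "c+1"] Suc.prems n by simp
  finally show ?case by simp
qed



definition B :: "nat \<Rightarrow> complex \<Rightarrow> complex" where
  "B m x = (x + of_nat m)^m - of_nat m * (x + of_nat m)^(m-1)"

lemma B_0[simp]: "B 0 x = 1" by (simp add: B_def)

lemma B_pos: "m \<ge> 1 \<Longrightarrow> B m x = x * (x + of_nat m)^(m-1)"
proof -
  assume "m \<ge> 1"
  then obtain m' where m: "m = Suc m'" by (cases m) auto
  show ?thesis unfolding B_def m by (simp add: algebra_simps)
qed

lemma choose_swap: "(n choose k) * ((n - k) choose j) = (n choose j) * ((n - j) choose k)"
proof (cases "j + k \<le> n")
  case True
  have 1: "(n choose (j+k)) * ((j+k) choose k) = (n choose k) * ((n - k) choose j)"
    using choose_mult[of k "j+k" n] True by simp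
  have 2: "(n choose (j+k)) * ((j+k) choose j) = (n choose j) * ((n - j) choose k)"
    using choose_mult[of j "j+k" n] True by simp
  have "((j+k) choose k) = ((j+k) choose j)"
    using binomial_symmetric[of k "j+k"] by simp
  then show ?thesis using 1 2 by simp
next
  case False
  have a: "(n choose k) * ((n - k) choose j) = 0"
    using False by (cases "k \<le> n") (simp_all add: binomial_eq_0)
  have b: "(n choose j) * ((n - j) choose k) = 0"
    using False by (cases "j \<le> n") (simp_all add: binomial_eq_0)
  show ?thesis by (simp only: a b)
qed

lemma E_lemma:
  assumes "m \<ge> 1"
  shows "(\<Sum>k\<le>m. of_nat (m choose k) * B k x * (-(x + of_nat k))^(m-k)) = 0"
proof -
  have t: "B k x * (-(x + of_nat k))^(m-k) = (-1)^m * x * ((-1)^k * (x + of_nat k)^(m-1))"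
    if "k \<le> m" for k
  proof (cases "k = 0")
    case True
    then obtain m' where m: "m = Suc m'" using assms by (cases m) auto
    show ?thesis using True unfolding m by (simp add: power_minus[of x])
  next
    case False
    have pm0: "(-1::complex)^m = (-1)^(m-k) * (-1)^k"
      using that by (simp flip: power_add)
    have sq: "(-1::complex)^k * (-1)^k = 1"
      by (simp flip: power_mult_distrib)
    have "(-1::complex)^m * (-1)^k = (-1)^(m-k) * ((-1)^k * (-1)^k)"
      by (simp only: pm0 mult.assoc)
    also have "\<dots> = (-1)^(m-k)" by (simp only: sq mult_1_right)
    finally have pm: "(-1::complex)^(m-k) = (-1)^m * (-1)^k" by simp
    have pw: "(x + of_nat k)^(k-1) * (x + of_nat k)^(m-k) = (x + of_nat k)^(m-1)"
      using that False by (simp flip: power_add)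
    have "B k x * (-(x + of_nat k))^(m-k) = x * (x + of_nat k)^(k-1) * ((-1)^(m-k) * (x + of_nat k)^(m-k))"
      using False B_pos[of k x] power_minus[of "x + of_nat k" "m-k"] by simp
    also have "\<dots> = (-1)^(m-k) * x * ((x + of_nat k)^(k-1) * (x + of_nat k)^(m-k))"
      by (simp only: ac_simps)
    also have "\<dots> = (-1)^m * x * ((-1)^k * (x + of_nat k)^(m-1))"
      by (simp only: pw pm ac_simps)
    finally show ?thesis .
  qed
  have "(\<Sum>k\<le>m. of_nat (m choose k) * B k x * (-(x + of_nat k))^(m-k))
      = (-1)^m * x * (\<Sum>k\<le>m. (-1)^k * of_nat (m choose k) * (x + of_nat k)^(m-1))"
    unfolding sum_distrib_left
  proof (rule sum.cong[OF refl])
    fix k assume "k \<in> {..m}"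
    then have km: "k \<le> m" by simp
    show "of_nat (m choose k) * B k x * (-(x + of_nat k))^(m-k)
       = (-1)^m * x * ((-1)^k * of_nat (m choose k) * (x + of_nat k)^(m-1))"
      by (simp only: mult.assoc t[OF km]) (simp only: ac_simps)
  qed
  also have "(\<Sum>k\<le>m. (-1)^k * of_nat (m choose k) * (x + of_nat k)^(m-1)) = 0"
    using FD[of "m-1" m x] assms by simp
  finally show ?thesis by simp
qed


lemma E_full: "(\<Sum>k\<le>m. of_nat (m choose k) * B k x * (-(x + of_nat k))^(m-k)) = (if m = 0 then 1 else 0)"
  using E_lemma[of m x] by (cases "m = 0") auto

lemma Abel1:
  fixes x z :: complex
  shows "(\<Sum>k\<le>n. of_nat (n choose k) * B k x * (z - x - of_nat k)^(n-k)) = z^n"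
proof -
  have exp: "(z - x - of_nat k)^(n-k) = (\<Sum>j\<le>n. of_nat ((n-k) choose j) * z^j * (-(x+of_nat k))^(n-k-j))" for k
  proof -
    have "(z - x - of_nat k)^(n-k) = (z + (-(x+of_nat k)))^(n-k)" by (simp add: algebra_simps)
    also have "\<dots> = (\<Sum>j\<le>n-k. of_nat ((n-k) choose j) * z^j * (-(x+of_nat k))^(n-k-j))"
      by (rule binomial_ring)
    also have "\<dots> = (\<Sum>j\<le>n. of_nat ((n-k) choose j) * z^j * (-(x+of_nat k))^(n-k-j))"
      by (rule sum.mono_neutral_left) (auto simp: binomial_eq_0)
    finally show ?thesis .
  qed
  have "(\<Sum>k\<le>n. of_nat (n choose k) * B k x * (z - x - of_nat k)^(n-k))
     = (\<Sum>k\<le>n. \<Sum>j\<le>n. of_nat (n choose k) * B k x * (of_nat ((n-k) choose j) * z^j * (-(x+of_nat k))^(n-k-j)))"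
    by (simp add: exp sum_distrib_left)
  also have "\<dots> = (\<Sum>j\<le>n. \<Sum>k\<le>n. of_nat (n choose k) * B k x * (of_nat ((n-k) choose j) * z^j * (-(x+of_nat k))^(n-k-j)))"
    by (rule sum.swap)
  also have "\<dots> = (\<Sum>j\<le>n. z^j * of_nat (n choose j) * (\<Sum>k\<le>n. of_nat ((n-j) choose k) * B k x * (-(x+of_nat k))^(n-j-k)))"
  proof (rule sum.cong[OF refl])
    fix j
    have c: "of_nat (n choose k) * (of_nat ((n-k) choose j) :: complex) = of_nat (n choose j) * of_nat ((n-j) choose k)" for k
      using choose_swap[of n k j] by (metis of_nat_mult)
    show "(\<Sum>k\<le>n. of_nat (n choose k) * B k x * (of_nat ((n-k) choose j) * z^j * (-(x+of_nat k))^(n-k-j)))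
        = z^j * of_nat (n choose j) * (\<Sum>k\<le>n. of_nat ((n-j) choose k) * B k x * (-(x+of_nat k))^(n-j-k))"
      unfolding sum_distrib_left
    proof (rule sum.cong[OF refl])
      fix k
      have "of_nat (n choose k) * B k x * (of_nat ((n-k) choose j) * z^j * (-(x+of_nat k))^(n-k-j))
          = (of_nat (n choose k) * of_nat ((n-k) choose j)) * B k x * z^j * (-(x+of_nat k))^(n-j-k)"
        by (simp add: diff_commute algebra_simps)
      also have "\<dots> = z ^ j * of_nat (n choose j) * (of_nat (n - j choose k) * B k x * (- (x + of_nat k)) ^ (n - j - k))"
        unfolding c by (simp add: algebra_simps)
      finally show "of_nat (n choose k) * B k x * (of_nat ((n-k) choose j) * z^j * (-(x+of_nat k))^(n-k-j))
          = z ^ j * of_nat (n choose j) * (of_nat (n - j choose k) * B k x * (- (x + of_nat k)) ^ (n - j - k))" .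
    qed
  qed
  also have "\<dots> = (\<Sum>j\<le>n. z^j * of_nat (n choose j) * (if n - j = 0 then 1 else 0))"
  proof (rule sum.cong[OF refl])
    fix j assume "j \<in> {..n}"
    have h: "(\<Sum>k\<le>n. of_nat ((n-j) choose k) * B k x * (-(x+of_nat k))^(n-j-k))
        = (\<Sum>k\<le>n-j. of_nat ((n-j) choose k) * B k x * (-(x+of_nat k))^(n-j-k))"
      by (rule sum.mono_neutral_right) (auto simp: binomial_eq_0)
    show "z^j * of_nat (n choose j) * (\<Sum>k\<le>n. of_nat ((n-j) choose k) * B k x * (-(x+of_nat k))^(n-j-k))
        = z^j * of_nat (n choose j) * (if n - j = 0 then 1 else 0)"
      unfolding h E_full ..
  qed
  also have "\<dots> = (\<Sum>j\<le>n. if j = n then z^n else 0)"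
    by (rule sum.cong[OF refl]) auto
  also have "\<dots> = z^n" by simp
  finally show ?thesis .
qed

lemma Conv:
  fixes x y :: complex
  shows "(\<Sum>j\<le>n. of_nat (n choose j) * B j x * B (n-j) y) = (x+y+of_nat n)^n - of_nat n * (x+y+of_nat n)^(n-1)"
proof (cases n)
  case 0 then show ?thesis by simp
next
  case (Suc n')
  have b: "B (n-j) y = (x + y + of_nat n - x - of_nat j)^(n-j) - of_nat (n-j) * ((x + y + of_nat n) - x - of_nat j)^(n-j-1)"
    if "j \<le> n" for j
    using that by (simp add: B_def of_nat_diff algebra_simps)
  have "(\<Sum>j\<le>n. of_nat (n choose j) * B j x * B (n-j) y)
      = (\<Sum>j\<le>n. of_nat (n choose j) * B j x * (x + y + of_nat n - x - of_nat j)^(n-j))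
        - (\<Sum>j\<le>n. of_nat (n choose j) * of_nat (n-j) * B j x * ((x + y + of_nat n) - x - of_nat j)^(n-j-1))"
    unfolding sum_subtractf[symmetric]
    by (rule sum.cong[OF refl]) (simp add: b algebra_simps)
  also have "(\<Sum>j\<le>n. of_nat (n choose j) * B j x * (x + y + of_nat n - x - of_nat j)^(n-j)) = (x+y+of_nat n)^n"
    by (rule Abel1)
  also have "(\<Sum>j\<le>n. of_nat (n choose j) * of_nat (n-j) * B j x * ((x + y + of_nat n) - x - of_nat j)^(n-j-1))
      = of_nat n * (\<Sum>j\<le>n'. of_nat (n' choose j) * B j x * ((x + y + of_nat n) - x - of_nat j)^(n'-j))"
  proof -
    have "(\<Sum>j\<le>n. of_nat (n choose j) * of_nat (n-j) * B j x * ((x + y + of_nat n) - x - of_nat j)^(n-j-1))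
       = (\<Sum>j\<le>n'. of_nat (n choose j) * of_nat (n-j) * B j x * ((x + y + of_nat n) - x - of_nat j)^(n-j-1))"
      by (rule sum.mono_neutral_right) (auto simp: Suc)
    also have "\<dots> = (\<Sum>j\<le>n'. of_nat n * (of_nat (n' choose j) * B j x * ((x + y + of_nat n) - x - of_nat j)^(n'-j)))"
    proof (rule sum.cong[OF refl])
      fix j assume "j \<in> {..n'}"
      hence j: "j \<le> n'" by simp
      have "(n choose j) * (n - j) = n * (n' choose j)"
        using binomial_absorb_comp[of n j] Suc by (simp add: mult.commute)
      hence "of_nat (n choose j) * of_nat (n - j) = (of_nat n * of_nat (n' choose j) :: complex)"
        by (metis of_nat_mult)
      moreover have "n - j - 1 = n' - j" using Suc by simp
      ultimately show "of_nat (n choose j) * of_nat (n-j) * B j x * ((x + y + of_nat n) - x - of_nat j)^(n-j-1)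
          = of_nat n * (of_nat (n' choose j) * B j x * ((x + y + of_nat n) - x - of_nat j)^(n'-j))"
        by (simp add: algebra_simps)
    qed
    finally show ?thesis by (simp add: sum_distrib_left)
  qed
  also have "(\<Sum>j\<le>n'. of_nat (n' choose j) * B j x * ((x + y + of_nat n) - x - of_nat j)^(n'-j))
      = (x + y + of_nat n)^n'"
    by (rule Abel1)
  finally show ?thesis using Suc by simp
qed

lemma Conv0:
  fixes x :: complex
  assumes "n \<ge> 1"
  shows "(\<Sum>j\<le>n. of_nat (n choose j) * B j x * B (n-j) (-x)) = 0"
proof -
  obtain n' where n: "n = Suc n'" using assms by (cases n) auto
  show ?thesis using Conv[of n x "-x"] unfolding n by simp
qed



lemma Conv1:
  fixes x :: complex
  assumes "k \<ge> 1"
  shows "(\<Sum>j\<le>k. (B j x / fact j) * (B (k-j) (-x) / fact (k-j))) = 0"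
proof -
  have "(\<Sum>j\<le>k. (B j x / fact j) * (B (k-j) (-x) / fact (k-j)))
      = (\<Sum>j\<le>k. of_nat (k choose j) * B j x * B (k-j) (-x)) / fact k"
    unfolding sum_divide_distrib
  proof (rule sum.cong[OF refl])
    fix j assume "j \<in> {..k}"
    hence j: "j \<le> k" by simp
    have "(of_nat (k choose j) :: complex) = fact k / (fact j * fact (k - j))"
      using binomial_fact[OF j] by simp
    then show "(B j x / fact j) * (B (k-j) (-x) / fact (k-j)) = of_nat (k choose j) * B j x * B (k-j) (-x) / fact k"
      by (simp add: field_simps)
  qed
  also have "\<dots> = 0" using Conv0[OF assms] by simp
  finally show ?thesis .
qed

lemma len_le_sum: "(\<forall>i\<in>set ks. i \<ge> (1::nat)) \<Longrightarrow> length ks \<le> sum_list ks"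
  by (induction ks) auto

lemma finite_comp: "finite (compositions k r)"
proof -
  have "compositions k r \<subseteq> {ks. set ks \<subseteq> {0..k} \<and> length ks = r}"
    unfolding compositions_def using member_le_sum_list by fastforce
  moreover have "finite {ks. set ks \<subseteq> {0..k} \<and> length ks = r}"
    by (rule finite_lists_length_eq) simp
  ultimately show ?thesis by (rule finite_subset)
qed

lemma comp_0: "compositions k 0 = (if k = 0 then {[]} else {})"
  unfolding compositions_def by auto

lemma comp_big: "r > k \<Longrightarrow> compositions k r = {}"
  unfolding compositions_def using len_le_sum by fastforce

lemma comp_Suc: "compositions k (Suc r) = (\<lambda>(j,ks). j#ks) ` (SIGMA j:{1..k}. compositions (k-j) r)"
proof (rule set_eqI)
  fix ks
  show "ks \<in> compositions k (Suc r) \<longleftrightarrow> ks \<in> (\<lambda>(j,ks). j#ks) ` (SIGMA j:{1..k}. compositions (k-j) r)"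
  proof
    assume "ks \<in> compositions k (Suc r)"
    then obtain j ks' where ks: "ks = j # ks'" and c: "length ks' = r" "\<forall>i\<in>set ks'. i \<ge> 1" "j \<ge> 1" "j + sum_list ks' = k"
      unfolding compositions_def by (cases ks) auto
    then have "(j, ks') \<in> (SIGMA j:{1..k}. compositions (k-j) r)"
      unfolding compositions_def by auto
    then show "ks \<in> (\<lambda>(j,ks). j#ks) ` (SIGMA j:{1..k}. compositions (k-j) r)"
      using ks by force
  next
    assume "ks \<in> (\<lambda>(j,ks). j#ks) ` (SIGMA j:{1..k}. compositions (k-j) r)"
    then show "ks \<in> compositions k (Suc r)"
      unfolding compositions_def by auto
  qed
qed

definition W :: "(nat \<Rightarrow> complex) \<Rightarrow> nat \<Rightarrow> nat \<Rightarrow> complex" where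
  "W F k r = (\<Sum>ks\<in>compositions k r. \<Prod>i<r. F (ks!i))"

lemma W_0: "W F k 0 = (if k = 0 then 1 else 0)"
  unfolding W_def comp_0 by simp

lemma W_big: "r > k \<Longrightarrow> W F k r = 0"
  unfolding W_def using comp_big by simp

lemma W_Suc: "W F k (Suc r) = (\<Sum>j=1..k. F j * W F (k-j) r)"
proof -
  have inj: "inj_on (\<lambda>(j,ks). j#ks) (SIGMA j:{1..k}. compositions (k-j) r)"
    by (auto simp: inj_on_def)
  have "W F k (Suc r) = (\<Sum>p\<in>(SIGMA j:{1..k}. compositions (k-j) r). \<Prod>i<Suc r. F (((\<lambda>(j,ks). j#ks) p)!i))"
    unfolding W_def comp_Suc by (simp only: sum.reindex[OF inj] o_def)
  also have "\<dots> = (\<Sum>j=1..k. \<Sum>ks\<in>compositions (k-j) r. \<Prod>i<Suc r. F ((j#ks)!i))"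
    by (subst sum.Sigma) (auto simp: finite_comp split_beta)
  also have "\<dots> = (\<Sum>j=1..k. F j * W F (k-j) r)"
    unfolding W_def by (simp only: prod.lessThan_Suc_shift nth_Cons_0 nth_Cons_Suc sum_distrib_left)
  finally show ?thesis .
qed

definition T :: "(nat \<Rightarrow> complex) \<Rightarrow> nat \<Rightarrow> complex" where
  "T F k = (\<Sum>r\<le>k. (-1)^(k+r) * W F k r)"

lemma T_ext: "m \<le> N \<Longrightarrow> (\<Sum>r\<le>N. (-1)^(m+r) * W F m r) = T F m"
  unfolding T_def by (rule sum.mono_neutral_right) (auto simp: W_big)

lemma T_0: "T F 0 = 1" unfolding T_def by (simp add: W_0)

lemma T_rec:
  assumes "k \<ge> 1"
  shows "T F k = (\<Sum>j=1..k. (-1)^(j+1) * F j * T F (k-j))"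
proof -
  obtain k' where k: "k = Suc k'" using assms by (cases k) auto
  have "T F k = (\<Sum>r\<le>k'. (-1)^(k+Suc r) * W F k (Suc r))"
    unfolding T_def k sum.atMost_Suc_shift W_0 by simp
  also have "\<dots> = (\<Sum>r\<le>k'. \<Sum>j=1..k. (-1)^(k+Suc r) * (F j * W F (k-j) r))"
    by (simp add: W_Suc sum_distrib_left)
  also have "\<dots> = (\<Sum>j=1..k. \<Sum>r\<le>k'. (-1)^(k+Suc r) * (F j * W F (k-j) r))"
    by (rule sum.swap)
  also have "\<dots> = (\<Sum>j=1..k. (-1)^(j+1) * F j * T F (k-j))"
  proof (rule sum.cong[OF refl])
    fix j assume "j \<in> {1..k}"
    hence j: "1 \<le> j" "j \<le> k" by auto
    have e: "k + Suc r = ((k-j)+r) + (j+1)" for r using j by simp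
    have "(\<Sum>r\<le>k'. (-1)^(k+Suc r) * (F j * W F (k-j) r))
        = (-1)^(j+1) * F j * (\<Sum>r\<le>k'. (-1)^((k-j)+r) * W F (k-j) r)"
      unfolding sum_distrib_left
      by (rule sum.cong[OF refl]) (simp only: e power_add, simp add: algebra_simps)
    also have "(\<Sum>r\<le>k'. (-1)^((k-j)+r) * W F (k-j) r) = T F (k-j)"
      using j k by (intro T_ext) simp
    finally show "(\<Sum>r\<le>k'. (-1)^(k+Suc r) * (F j * W F (k-j) r)) = (-1)^(j+1) * F j * T F (k-j)" .
  qed
  finally show ?thesis .
qed

lemma T_eq:
  assumes G0: "G 0 = 1"
    and Grec: "\<And>k. k \<ge> 1 \<Longrightarrow> G k = (\<Sum>j=1..k. (-1)^(j+1) * F j * G (k-j))"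
  shows "T F k = G k"
proof (induction k rule: less_induct)
  case (less k)
  show ?case
  proof (cases "k = 0")
    case True then show ?thesis using G0 T_0 by simp
  next
    case False
    then have k: "k \<ge> 1" by simp
    have "T F k = (\<Sum>j=1..k. (-1)^(j+1) * F j * T F (k-j))" by (rule T_rec[OF k])
    also have "\<dots> = (\<Sum>j=1..k. (-1)^(j+1) * F j * G (k-j))"
      by (rule sum.cong[OF refl]) (simp add: less.IH)
    also have "\<dots> = G k" using Grec[OF k] by simp
    finally show ?thesis .
  qed
qed

lemma rec_from_conv:
  fixes H F G :: "nat \<Rightarrow> complex"
  assumes k: "k \<ge> 1"
    and c: "(\<Sum>j\<le>k. (-1)^j * H j * G (k-j)) = 0"
    and H0: "H 0 = 1"
    and HF: "\<And>j. j \<ge> 1 \<Longrightarrow> H j = F j"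
  shows "G k = (\<Sum>j=1..k. (-1)^(j+1) * F j * G (k-j))"
proof -
  have "{..k} = insert 0 {1..k}" by auto
  then have "(\<Sum>j\<le>k. (-1)^j * H j * G (k-j)) = G k + (\<Sum>j=1..k. (-1)^j * F j * G (k-j))"
    using H0 HF by (simp add: sum.insert)
  with c have "G k = - (\<Sum>j=1..k. (-1)^j * F j * G (k-j))"
    by (simp add: eq_neg_iff_add_eq_0)
  also have "\<dots> = (\<Sum>j=1..k. (-1)^(j+1) * F j * G (k-j))"
    by (simp add: sum_negf[symmetric])
  finally show ?thesis .
qed


lemma sgn_diff:
  assumes "j \<le> (k::nat)"
  shows "(-1::complex)^(k-j) = (-1)^k * (-1)^j"
proof -
  have pm0: "(-1::complex)^k = (-1)^(k-j) * (-1)^j"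
    using assms by (simp flip: power_add)
  have sq: "(-1::complex)^j * (-1)^j = 1"
    by (simp flip: power_mult_distrib)
  have "(-1::complex)^k * (-1)^j = (-1)^(k-j) * ((-1)^j * (-1)^j)"
    by (simp only: pm0 mult.assoc)
  also have "\<dots> = (-1)^(k-j)" by (simp only: sq mult_1_right)
  finally show ?thesis by (rule sym)
qed

lemma sumT:
  assumes "k \<ge> 1"
  shows "(\<Sum>r=1..k. (-1) ^ (k - r) * (\<Sum>ks\<in>compositions k r. \<Prod>i<r. F (ks!i))) = T F k"
proof -
  have "{..k} = insert 0 {1..k}" by auto
  then have "T F k = (-1)^k * W F k 0 + (\<Sum>r=1..k. (-1)^(k+r) * W F k r)"
    unfolding T_def by (simp add: sum.insert)
  also have "(-1)^k * W F k 0 = 0" using assms by (simp add: W_0)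
  also have "(\<Sum>r=1..k. (-1)^(k+r) * W F k r) = (\<Sum>r=1..k. (-1) ^ (k - r) * (\<Sum>ks\<in>compositions k r. \<Prod>i<r. F (ks!i)))"
  proof (rule sum.cong[OF refl])
    fix r assume "r \<in> {1..k}"
    then have "r \<le> k" by simp
    then have "(-1::complex)^(k-r) = (-1)^(k+r)" by (simp add: sgn_diff power_add)
    then show "(-1)^(k+r) * W F k r = (-1) ^ (k - r) * (\<Sum>ks\<in>compositions k r. \<Prod>i<r. F (ks!i))"
      by (simp add: W_def)
  qed
  finally show ?thesis by simp
qed

lemma Q_B: "(-1)^m * (if m = 0 then 1 else a * (a - of_nat m)^(m-1) / of_nat (fact m)) = B m (-a) / fact m"
proof (cases "m = 0")
  case True then show ?thesis by simp
next
  case False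
  have e: "-a + of_nat m = -(a - of_nat m)" by simp
  have m1: "m \<ge> 1" using False by simp
  have "B m (-a) = (-a) * (-a + of_nat m)^(m-1)"
    by (rule B_pos[OF m1])
  also have "\<dots> = (-a) * ((-1)^(m-1) * (a - of_nat m)^(m-1))"
    by (simp only: e power_minus[of "a - of_nat m" "m-1"])
  also have "\<dots> = ((-1) * (-1)^(m-1)) * (a * (a - of_nat m)^(m-1))"
    by (simp only: mult_minus_left mult_minus_right mult_1_left ac_simps)
  also have "(-1::complex) * (-1)^(m-1) = (-1)^m"
  proof -
    from m1 obtain m' where "m = Suc m'" by (cases m) auto
    then show ?thesis by (simp only: diff_Suc_1 power_Suc)
  qed
  finally have bb: "B m (-a) = (-1)^m * (a * (a - of_nat m)^(m-1))" .
  show ?thesis by (simp only: bb if_not_P[OF False] of_nat_fact times_divide_eq_right)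
qed

lemma P_B: "(if m = 0 then 1 else a * (a + of_nat m)^(m-1) / of_nat (fact m)) = B m a / fact m"
proof (cases "m = 0")
  case True then show ?thesis by simp
next
  case False
  then have bb: "B m a = a * (a + of_nat m)^(m-1)" by (simp add: B_pos)
  show ?thesis by (simp only: bb if_not_P[OF False] of_nat_fact)
qed

theorem mainTheorem10:
  fixes a :: complex and k :: nat
  assumes "k \<ge> 1"
  shows "(\<Sum>r=1..k. (-1) ^ (k - r) *
            (\<Sum>ks\<in>compositions k r. \<Prod>i<r.
               a * (a - of_nat (ks!i)) ^ (ks!i - 1) / of_nat (fact (ks!i))))
           = a * (a + of_nat k) ^ (k - 1) / of_nat (fact k)
       \<and> (\<Sum>r=1..k. (-1) ^ (k - r) *
            (\<Sum>ks\<in>compositions k r. \<Prod>i<r.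
               a * (a + of_nat (ks!i)) ^ (ks!i - 1) / of_nat (fact (ks!i))))
           = a * (a - of_nat k) ^ (k - 1) / of_nat (fact k)"
proof -
  define F1 where "F1 = (\<lambda>m::nat. a * (a - of_nat m)^(m-1) / of_nat (fact m))"
  define F2 where "F2 = (\<lambda>m::nat. a * (a + of_nat m)^(m-1) / of_nat (fact m))"
  define Q where "Q = (\<lambda>m::nat. if m = 0 then 1 else a * (a - of_nat m)^(m-1) / of_nat (fact m))"
  define P where "P = (\<lambda>m::nat. if m = 0 then 1 else a * (a + of_nat m)^(m-1) / of_nat (fact m))"
  have QB: "(-1)^m * Q m = B m (-a) / fact m" for m unfolding Q_def by (rule Q_B)
  have PB: "P m = B m a / fact m" for m unfolding P_def by (rule P_B)
  have T1: "T F1 k = P k"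
  proof (rule T_eq)
    show "P 0 = 1" by (simp add: P_def)
  next
    fix n :: nat assume n: "n \<ge> 1"
    show "P n = (\<Sum>j=1..n. (-1)^(j+1) * F1 j * P (n-j))"
    proof (rule rec_from_conv[OF n, where H = Q])
      show "(\<Sum>j\<le>n. (-1)^j * Q j * P (n-j)) = 0"
        using Conv1[OF n, of "-a"] by (simp add: QB PB)
      show "Q 0 = 1" by (simp add: Q_def)
      show "Q j = F1 j" if "j \<ge> 1" for j using that by (simp add: Q_def F1_def)
    qed
  qed
  have T2: "T F2 k = Q k"
  proof (rule T_eq)
    show "Q 0 = 1" by (simp add: Q_def)
  next
    fix n :: nat assume n: "n \<ge> 1"
    show "Q n = (\<Sum>j=1..n. (-1)^(j+1) * F2 j * Q (n-j))"
    proof (rule rec_from_conv[OF n, where H = P])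
      have "(\<Sum>j\<le>n. (-1)^j * P j * Q (n-j)) = (\<Sum>j\<le>n. (-1)^n * ((B j a / fact j) * (B (n-j) (-a) / fact (n-j))))"
      proof (rule sum.cong[OF refl])
        fix j assume "j \<in> {..n}"
        then have j: "j \<le> n" by simp
        have sq: "(-1::complex)^n * (-1)^n = 1" by (simp flip: power_mult_distrib)
        have "(-1::complex)^j * Q (n-j) = (-1)^n * ((-1)^(n-j) * Q (n-j))"
          by (simp only: sgn_diff[OF j] mult.assoc[symmetric] sq mult_1_left)
        then show "(-1)^j * P j * Q (n-j) = (-1)^n * ((B j a / fact j) * (B (n-j) (-a) / fact (n-j)))"
          by (simp add: QB PB mult.assoc mult.left_commute)
      qed
      also have "\<dots> = (-1)^n * (\<Sum>j\<le>n. (B j a / fact j) * (B (n-j) (-a) / fact (n-j)))"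
        by (rule sum_distrib_left[symmetric])
      also have "\<dots> = 0"
        by (simp only: Conv1[OF n] mult_zero_right)
      finally show "(\<Sum>j\<le>n. (-1)^j * P j * Q (n-j)) = 0" .
      show "P 0 = 1" by (simp add: P_def)
      show "P j = F2 j" if "j \<ge> 1" for j using that by (simp add: P_def F2_def)
    qed
  qed
  have L1: "(\<Sum>r=1..k. (-1) ^ (k - r) *
            (\<Sum>ks\<in>compositions k r. \<Prod>i<r.
               a * (a - of_nat (ks!i)) ^ (ks!i - 1) / of_nat (fact (ks!i)))) = T F1 k"
    using sumT[OF assms, of F1] by (simp add: F1_def)
  have L2: "(\<Sum>r=1..k. (-1) ^ (k - r) *
            (\<Sum>ks\<in>compositions k r. \<Prod>i<r.
               a * (a + of_nat (ks!i)) ^ (ks!i - 1) / of_nat (fact (ks!i)))) = T F2 k"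
    using sumT[OF assms, of F2] by (simp add: F2_def)
  show ?thesis using L1 L2 T1 T2 assms by (simp add: P_def Q_def)
qed

end
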